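(* Let $n\ge3$, let $\lambda_1,\dots,\lambda_{n-2}\in\mathbb{R}\setminus\{0\}$ and let $M^n_{\underline\lambda}=(\mathbb{R}^n,g_{\underline\lambda})$ with coordinates $(s,t,x_1,\dots,x_{n-2})$ and $g_{\underline\lambda}=2\,ds\,dt+\sum_{j=1}^{n-2}\lambda_jx_j^2\,ds^2+\sum_{j=1}^{n-2}dx_j^2$. Trivialize its (unique) spin structure by the global orthonormal frame $(\mathfrak a_{\bar0},\mathfrak a_0,\mathfrak a_1,\dots,\mathfrak a_{n-2})$ described in the context, so that spinor fields are smooth functions $M^n_{\underline\lambda}\to\Delta_{n,1}$. Then the space of parallel spinors of $M^n_{\underline\lambda}$ is $$\mathcal P(M_{\underline\lambda})=\{\varphi\in C^\infty(M_{\underline\lambda},\Delta_{n,1})\mid \varphi\equiv v \text{ constant with } v\in\Delta_V\},$$ where $\Delta_V=\{v\in\Delta_{n,1}\mid (e_2-e_1)\cdot v=0\}$. In particular $\dim_{\mathbb C}\mathcal P(M_{\underline\lambda})=\frac12\cdot2^{[n/2]}$.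
   Context: The global orthonormal frame is $\mathfrak a_{\bar0}=\partial_s-\frac12(\sum_j\lambda_jx_j^2+1)\partial_t$ (timelike), $\mathfrak a_0=\partial_s-\frac12(\sum_j\lambda_jx_j^2-1)\partial_t$, $\mathfrak a_j=\partial_{x_j}$ ($j=1,\dots,n-2$). $\Delta_{n,1}=\mathbb C^{2^{[n/2]}}$ is the complex spinor module of $\mathrm{Spin}(n,1)$, where the Clifford algebra is generated by an orthonormal basis $e_1,\dots,e_n$ of $\mathbb R^n$ with relations $e_ie_j+e_je_i=-2\varepsilon_j\delta_{ij}$, $\varepsilon_1=-1$, $\varepsilon_j=1$ for $j\ge2$. In the trivialization, Clifford multiplication by $\mathfrak a_{\bar0},\mathfrak a_0,\mathfrak a_j$ corresponds to the action of $e_1,e_2,e_{j+2}$ respectively; thus $e_2-e_1$ corresponds to the parallel isotropic field $V=\partial_t=\mathfrak a_0-\mathfrak a_{\bar0}$. A spinor field is parallel if $\nabla^S\varphi=0$ for the spinor derivative induced by the Levi-Civita connection. *)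

theory Defs
  imports "HOL-Analysis.Analysis" "HOL-Library.Function_Algebras"
begin

text \<open>Points of M = R^n, n = CARD('m) + 2, with coordinates (s, t, x), x in R^(n-2).\<close>
type_synonym 'm pt = "real \<times> real \<times> (real^'m)"

text \<open>Index set of the global orthonormal frame (a_bar0, a_0, a_1, ..., a_(n-2)),
  corresponding to the Clifford generators e_1, e_2, e_3, ..., e_n.\<close>
datatype 'm fidx = Bar0 | Zero | Xc 'm

lemma UNIV_fidx: "(UNIV :: 'm fidx set) = {Bar0, Zero} \<union> range Xc"
  by (auto intro: fidx.exhaust)

instance fidx :: (finite) finite
  by standard (simp add: UNIV_fidx)

text \<open>Signature: eps Bar0 = -1 (timelike, e_1), all others +1.\<close>
definition eps :: "'m fidx \<Rightarrow> real" where
  "eps i = (if i = Bar0 then -1 else 1)"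

text \<open>sum_j lambda_j x_j^2\<close>
definition Fq :: "real^('m::finite) \<Rightarrow> 'm pt \<Rightarrow> real" where
  "Fq lam p = (\<Sum>j\<in>UNIV. lam$j * ((snd (snd p))$j)^2)"

text \<open>The metric g = 2 ds dt + (sum_j lambda_j x_j^2) ds^2 + sum_j dx_j^2 at the point p.\<close>
definition gmet :: "real^('m::finite) \<Rightarrow> 'm pt \<Rightarrow> 'm pt \<Rightarrow> 'm pt \<Rightarrow> real" where
  "gmet lam p u w = fst u * fst (snd w) + fst (snd u) * fst w
      + Fq lam p * fst u * fst w + (snd (snd u)) \<bullet> (snd (snd w))"

text \<open>The global orthonormal frame.\<close>
definition frame :: "real^('m::finite) \<Rightarrow> 'm fidx \<Rightarrow> 'm pt \<Rightarrow> 'm pt" where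
  "frame lam k p = (case k of
      Bar0 \<Rightarrow> (1, -(1/2) * (Fq lam p + 1), 0)
    | Zero \<Rightarrow> (1, -(1/2) * (Fq lam p - 1), 0)
    | Xc j \<Rightarrow> (0, 0, axis j 1))"

text \<open>Directional derivative of f at p in direction v.\<close>
definition dder :: "('a::real_normed_vector \<Rightarrow> 'b::real_normed_vector) \<Rightarrow> 'a \<Rightarrow> 'a \<Rightarrow> 'b" where
  "dder f p v = frechet_derivative f (at p) v"

text \<open>Lie bracket of vector fields on M.\<close>
definition lie :: "(('m::finite) pt \<Rightarrow> 'm pt) \<Rightarrow> ('m pt \<Rightarrow> 'm pt) \<Rightarrow> 'm pt \<Rightarrow> 'm pt" where
  "lie X Y p = dder Y p (X p) - dder X p (Y p)"

text \<open>Koszul formula: the value g(nabla_X Y, Z)(p) for the Levi-Civita connection nabla of g.\<close>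
definition LC :: "real^('m::finite) \<Rightarrow> ('m pt \<Rightarrow> 'm pt) \<Rightarrow> ('m pt \<Rightarrow> 'm pt) \<Rightarrow> ('m pt \<Rightarrow> 'm pt) \<Rightarrow> 'm pt \<Rightarrow> real" where
  "LC lam X Y Z p = (1/2) *
     ( dder (\<lambda>q. gmet lam q (Y q) (Z q)) p (X p)
     + dder (\<lambda>q. gmet lam q (Z q) (X q)) p (Y p)
     - dder (\<lambda>q. gmet lam q (X q) (Y q)) p (Z p)
     + gmet lam p (lie X Y p) (Z p)
     - gmet lam p (lie Y Z p) (X p)
     - gmet lam p (lie X Z p) (Y p))"

text \<open>Connection forms omega_ij(a_k) = g(nabla_(a_k) a_i, a_j).\<close>
definition omega :: "real^('m::finite) \<Rightarrow> 'm fidx \<Rightarrow> 'm fidx \<Rightarrow> 'm fidx \<Rightarrow> 'm pt \<Rightarrow> real" where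
  "omega lam k i j p = LC lam (frame lam k) (frame lam i) (frame lam j) p"

text \<open>Clifford relations e_i e_j + e_j e_i = -2 eps_j delta_ij on the spinor module.\<close>
definition is_clifford :: "('m fidx \<Rightarrow> complex^'s^'s) \<Rightarrow> bool" where
  "is_clifford E \<longleftrightarrow> (\<forall>i j. E i ** E j + E j ** E i =
      (if i = j then mat (complex_of_real (-2 * eps i)) else 0))"

text \<open>Spinor derivative in the trivialization given by the frame:
  nabla^S_(a_k) phi = a_k(phi) + 1/2 sum_(i<j) eps_i eps_j omega_ij(a_k) e_i e_j phi,
  written equivalently as 1/4 times the full double sum.\<close>
definition nablaS :: "real^('m::finite) \<Rightarrow> ('m fidx \<Rightarrow> complex^'s^'s) \<Rightarrow> 'm fidx
    \<Rightarrow> ('m pt \<Rightarrow> complex^'s) \<Rightarrow> 'm pt \<Rightarrow> complex^'s" where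
  "nablaS lam E k phi p = dder phi p (frame lam k p)
     + (\<Sum>i\<in>UNIV. \<Sum>j\<in>UNIV.
          complex_of_real ((1/4) * eps i * eps j * omega lam k i j p) *s ((E i ** E j) *v phi p))"

text \<open>C^k maps between real normed vector spaces, and C^infinity.\<close>
fun Ck :: "nat \<Rightarrow> ('a::real_normed_vector \<Rightarrow> 'b::real_normed_vector) \<Rightarrow> bool" where
  "Ck 0 f = continuous_on UNIV f"
| "Ck (Suc k) f = (\<exists>f'. (\<forall>x. (f has_derivative f' x) (at x)) \<and> (\<forall>v. Ck k (\<lambda>x. f' x v)))"

definition smooth :: "('a::real_normed_vector \<Rightarrow> 'b::real_normed_vector) \<Rightarrow> bool" where
  "smooth f \<longleftrightarrow> (\<forall>k. Ck k f)"

text \<open>The space of parallel spinors.\<close>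
definition parallel_spinors :: "real^('m::finite) \<Rightarrow> ('m fidx \<Rightarrow> complex^'s^'s) \<Rightarrow> ('m pt \<Rightarrow> complex^'s) set" where
  "parallel_spinors lam E = {phi. smooth phi \<and> (\<forall>k p. nablaS lam E k phi p = 0)}"

text \<open>Delta_V = {v. (e_2 - e_1) . v = 0}.\<close>
definition DeltaV :: "('m fidx \<Rightarrow> complex^'s^'s) \<Rightarrow> (complex^'s) set" where
  "DeltaV E = {v. (E Zero - E Bar0) *v v = 0}"

text \<open>Complex scalar multiplication on spinor fields.\<close>
definition fscale :: "complex \<Rightarrow> ('m pt \<Rightarrow> complex^'s) \<Rightarrow> ('m pt \<Rightarrow> complex^'s)" where
  "fscale c f = (\<lambda>p. c *s f p)"

end

theory Submission
  imports Defs
begin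

lemma mat_mult_vec: "mat c *v x = c *s (x::'a::comm_ring_1^'n)"
  by (simp add: vec_eq_iff matrix_vector_mult_def mat_def if_distrib[of "\<lambda>z. z * _"] sum.delta cong: if_cong)

lemma cliff_vec:
  assumes "is_clifford E"
  shows "E i *v (E j *v u) + E j *v (E i *v u) = (if i = j then complex_of_real (-2 * eps i) *s u else 0)"
proof -
  have "E i *v (E j *v u) + E j *v (E i *v u) = (E i ** E j + E j ** E i) *v u"
    by (simp add: matrix_vector_mul_assoc matrix_vector_mult_add_rdistrib)
  also have "\<dots> = (if i = j then complex_of_real (-2 * eps i) *s u else 0)"
    using assms unfolding is_clifford_def by (simp add: mat_mult_vec)
  finally show ?thesis .
qed

lemma cliff_sq:
  assumes "is_clifford E"
  shows "E i *v (E i *v u) = complex_of_real (- eps i) *s u"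
proof (rule iffD2[OF vec_eq_iff], rule allI)
  fix k
  have h: "(E i *v (E i *v u) + E i *v (E i *v u)) $ k = (complex_of_real (-2 * eps i) *s u) $ k"
    using cliff_vec[OF assms, of i i u] by simp
  then have "2 * (E i *v (E i *v u)) $ k = complex_of_real (-2 * eps i) * u $ k"
    by (simp only: mult_2 vector_add_component vector_smult_component)
  then have "(E i *v (E i *v u)) $ k = complex_of_real (-2 * eps i) * u $ k / 2"
    by (simp add: field_simps)
  then show "(E i *v (E i *v u)) $ k = (complex_of_real (- eps i) *s u) $ k" by simp
qed

lemma cliff_anti:
  assumes "is_clifford E" "i \<noteq> j"
  shows "E i *v (E j *v u) = - (E j *v (E i *v u))"
  using cliff_vec[OF assms(1), of i j u] assms(2) by (simp add: add_eq_0_iff)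


definition sf :: "'m fidx \<Rightarrow> real" where
  "sf k = (case k of Xc a \<Rightarrow> 0 | _ \<Rightarrow> 1)"

definition xv :: "real^('m::finite) \<Rightarrow> 'm fidx \<Rightarrow> 'm pt \<Rightarrow> real" where
  "xv lam k p = (case k of Xc a \<Rightarrow> lam$a * (snd (snd p))$a | _ \<Rightarrow> 0)"

definition DF :: "real^('m::finite) \<Rightarrow> 'm pt \<Rightarrow> 'm pt \<Rightarrow> real" where
  "DF lam p w = (\<Sum>j\<in>UNIV. lam$j * (2 * (snd (snd p))$j * (snd (snd w))$j))"

lemma hd_x [derivative_intros]: "((\<lambda>x::'m::finite pt. snd (snd x) $ j) has_derivative (\<lambda>w. snd (snd w) $ j)) F"
proof -
  have 1: "bounded_linear (\<lambda>x::'m pt. snd (snd x))"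
    by (rule bounded_linear_compose[OF bounded_linear_snd bounded_linear_snd])
  have "bounded_linear (\<lambda>x::'m pt. snd (snd x) $ j)"
    by (rule bounded_linear_compose[OF bounded_linear_vec_nth 1])
  then show ?thesis by (rule bounded_linear_imp_has_derivative)
qed

lemma Fq_deriv: "((\<lambda>q. Fq lam q) has_derivative DF lam p) (at p)"
  unfolding Fq_def DF_def
  apply (rule derivative_eq_intros refl | simp)+
  apply (simp add: fun_eq_iff ac_simps)
  done

lemma frame_deriv: "(frame lam k has_derivative (\<lambda>w. (0, - sf k * DF lam p w / 2, 0))) (at p)"
proof (cases k)
  case Bar0
  have "((\<lambda>p. (1::real, -(1/2) * (Fq lam p + 1), 0::real^'a)) has_derivative (\<lambda>w. (0, - sf k * DF lam p w / 2, 0))) (at p)"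
    using Bar0 by (auto intro!: derivative_eq_intros Fq_deriv simp: sf_def)
  then show ?thesis using Bar0 by (simp add: frame_def[abs_def])
next
  case Zero
  have "((\<lambda>p. (1::real, -(1/2) * (Fq lam p - 1), 0::real^'a)) has_derivative (\<lambda>w. (0, - sf k * DF lam p w / 2, 0))) (at p)"
    using Zero by (auto intro!: derivative_eq_intros Fq_deriv simp: sf_def)
  then show ?thesis using Zero by (simp add: frame_def[abs_def])
next
  case (Xc a)
  have "((\<lambda>p. (0::real, 0::real, axis a (1::real))) has_derivative (\<lambda>w. (0, - sf k * DF lam p w / 2, 0))) (at p)"
    using Xc by (auto intro!: derivative_eq_intros simp: sf_def zero_prod_def fun_eq_iff)
  then show ?thesis using Xc by (simp add: frame_def[abs_def])
qed

lemma dder_frame: "dder (frame lam k) p w = (0, - sf k * DF lam p w / 2, 0)"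
  unfolding dder_def using frechet_derivative_at[OF frame_deriv[of lam k p], symmetric] by simp

lemma dder_const: "dder (\<lambda>q. c) p w = 0"
  unfolding dder_def using frechet_derivative_at[OF has_derivative_const[of c "at p"]] by simp

definition eta :: "'m fidx \<Rightarrow> 'm fidx \<Rightarrow> real" where
  "eta i j = (if i = j then eps i else 0)"

lemma gmet_frame: "gmet lam q (frame lam i q) (frame lam j q) = eta i j"
  by (cases i; cases j) (auto simp: gmet_def frame_def eta_def eps_def inner_axis_axis field_simps)

lemma DF_frame: "DF lam p (frame lam i p) = 2 * xv lam i p"
  by (cases i) (auto simp: DF_def frame_def xv_def axis_def if_distrib cong: if_cong)

lemma lie_frame: "lie (frame lam i) (frame lam j) p = (0, sf i * xv lam j p - sf j * xv lam i p, 0)"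
  by (simp add: lie_def dder_frame DF_frame algebra_simps)

lemma gmet_t: "gmet lam p (0, c, 0) (frame lam k p) = c * sf k"
  by (cases k) (auto simp: gmet_def frame_def sf_def)

lemma omega_eq: "omega lam k i j p = sf k * (sf j * xv lam i p - sf i * xv lam j p)"
  unfolding omega_def LC_def gmet_frame dder_const lie_frame gmet_t
  by (simp add: algebra_simps)


lemma sum_fidx: "sum f (UNIV :: ('m::finite) fidx set) = f Bar0 + f Zero + (\<Sum>a\<in>UNIV. f (Xc a))"
proof -
  have "sum f (UNIV :: 'm fidx set) = sum f {Bar0, Zero} + sum f (range Xc)"
    unfolding UNIV_fidx by (rule sum.union_disjoint) auto
  also have "sum f (range Xc) = (\<Sum>a\<in>UNIV. f (Xc a))"
    by (subst sum.reindex) (auto simp: inj_on_def)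
  finally show ?thesis by simp
qed

definition Nop :: "('m fidx \<Rightarrow> complex^'s^'s) \<Rightarrow> complex^'s \<Rightarrow> complex^'s" where
  "Nop E w = E Zero *v w - E Bar0 *v w"

definition Xop :: "real^('m::finite) \<Rightarrow> ('m fidx \<Rightarrow> complex^'s^'s) \<Rightarrow> 'm pt \<Rightarrow> complex^'s \<Rightarrow> complex^'s" where
  "Xop lam E p w = (\<Sum>a\<in>UNIV. complex_of_real (lam$a * (snd (snd p))$a) *s (E (Xc a) *v w))"

lemma double_sum:
  "(\<Sum>i\<in>UNIV. \<Sum>j\<in>UNIV. complex_of_real (a i * b j) *s (E i *v (E j *v w)))
   = (\<Sum>i\<in>UNIV. complex_of_real (a i) *s (E i *v (\<Sum>j\<in>UNIV. complex_of_real (b j) *s (E j *v w))))"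
  by (simp add: vec.sum vector_scalar_commute vec.scale_sum_right vector_smult_assoc)

lemma sumN: fixes E :: "('m::finite) fidx \<Rightarrow> complex^'s^'s" shows "(\<Sum>j\<in>UNIV. complex_of_real (eps j * sf j) *s (E j *v w)) = Nop E w"
  unfolding sum_fidx by (simp add: eps_def sf_def Nop_def vec_eq_iff)

lemma sumX: "(\<Sum>i\<in>UNIV. complex_of_real (eps i * xv lam i p) *s (E i *v w)) = Xop lam E p w"
  unfolding sum_fidx by (simp add: eps_def xv_def Xop_def)

lemma spin_sum:
  "(\<Sum>i\<in>UNIV. \<Sum>j\<in>UNIV.
      complex_of_real ((1/4) * eps i * eps j * omega lam k i j p) *s ((E i ** E j) *v w))
   = complex_of_real (sf k / 4) *s (Xop lam E p (Nop E w) - Nop E (Xop lam E p w))"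
proof -
  have "(\<Sum>i\<in>UNIV. \<Sum>j\<in>UNIV.
      complex_of_real ((1/4) * eps i * eps j * omega lam k i j p) *s ((E i ** E j) *v w))
    = (\<Sum>i\<in>UNIV. \<Sum>j\<in>UNIV. complex_of_real (sf k / 4) *s
        (complex_of_real ((eps i * xv lam i p) * (eps j * sf j)) *s (E i *v (E j *v w))
       - complex_of_real ((eps i * sf i) * (eps j * xv lam j p)) *s (E i *v (E j *v w))))"
    by (intro sum.cong refl) (simp add: omega_eq matrix_vector_mul_assoc vec_eq_iff algebra_simps)
  also have "\<dots> = complex_of_real (sf k / 4) *s
      ((\<Sum>i\<in>UNIV. \<Sum>j\<in>UNIV. complex_of_real ((eps i * xv lam i p) * (eps j * sf j)) *s (E i *v (E j *v w)))
      - (\<Sum>i\<in>UNIV. \<Sum>j\<in>UNIV. complex_of_real ((eps i * sf i) * (eps j * xv lam j p)) *s (E i *v (E j *v w))))"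
    by (simp add: vec.scale_sum_right sum_subtractf vec.scale_right_diff_distrib)
  also have "\<dots> = complex_of_real (sf k / 4) *s (Xop lam E p (Nop E w) - Nop E (Xop lam E p w))"
    unfolding double_sum sumN sumX
    by (simp add: Nop_def Xop_def)
  finally show ?thesis .
qed


lemma const_from_deriv:
  fixes phi :: "('m::finite) pt \<Rightarrow> 'b::real_normed_vector"
  assumes hd: "\<And>x. (phi has_derivative f' x) (at x)"
    and hx: "\<And>p v. f' p (0, 0, v) = 0"
    and h0: "\<And>s t w. f' (s, t, 0) w = 0"
  shows "phi p = phi (0, 0, 0)"
proof -
  obtain s t x where p: "p = (s, t, x)" by (cases p) auto
  have "\<exists>c. \<forall>y\<in>UNIV. phi (s, t, y) = c"
  proof (rule has_derivative_zero_constant[OF convex_UNIV])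
    fix y :: "real^'m"
    have d1: "((\<lambda>y. (s, t, y)) has_derivative (\<lambda>v. (0, 0, v))) (at y within UNIV)"
      by (auto intro!: derivative_eq_intros)
    have "((\<lambda>y. phi (s, t, y)) has_derivative (\<lambda>v. f' (s, t, y) (0, 0, v))) (at y within UNIV)"
      using has_derivative_compose[OF d1 hd] by simp
    then show "((\<lambda>y. phi (s, t, y)) has_derivative (\<lambda>h. 0)) (at y within UNIV)"
      by (simp add: hx)
  qed
  then have 1: "phi (s, t, x) = phi (s, t, 0)" by auto
  have "\<exists>c. \<forall>q\<in>UNIV. phi (fst q, snd q, 0) = c"
  proof (rule has_derivative_zero_constant[OF convex_UNIV])
    fix q :: "real \<times> real"
    have d1: "((\<lambda>q. (fst q, snd q, 0::real^'m)) has_derivative (\<lambda>w. (fst w, snd w, 0))) (at q within UNIV)"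
      by (auto intro!: derivative_eq_intros)
    have "((\<lambda>q. phi (fst q, snd q, 0)) has_derivative (\<lambda>w. f' (fst q, snd q, 0) (fst w, snd w, 0))) (at q within UNIV)"
      using has_derivative_compose[OF d1 hd] by simp
    then show "((\<lambda>q. phi (fst q, snd q, 0)) has_derivative (\<lambda>h. 0)) (at q within UNIV)"
      by (simp add: h0)
  qed
  then have 2: "phi (s, t, 0) = phi (0, 0, 0)"
    by (metis UNIV_I fst_conv snd_conv)
  show ?thesis using 1 2 p by simp
qed

lemma Nop_scale: "Nop E (c *s u) = c *s Nop E u"
  by (simp add: Nop_def vector_scalar_commute vec.scale_right_diff_distrib)

lemma Nop_sum: "Nop E (sum f S) = (\<Sum>a\<in>S. Nop E (f a))"
  by (simp add: Nop_def vec.sum sum_subtractf)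

lemma Nop_anti:
  assumes "is_clifford E"
  shows "E (Xc a) *v Nop E w = - Nop E (E (Xc a) *v w)"
  using cliff_anti[OF assms, of "Xc a" Zero w] cliff_anti[OF assms, of "Xc a" Bar0 w]
  by (simp add: Nop_def vec.diff)

lemma Xop_zero: "Xop lam E p 0 = 0"
  by (simp add: Xop_def)

lemma commut_zero:
  assumes "is_clifford E" "Nop E v = 0"
  shows "Xop lam E p (Nop E v) - Nop E (Xop lam E p v) = 0"
proof -
  have "Nop E (Xop lam E p v) = (\<Sum>a\<in>UNIV. complex_of_real (lam$a * (snd (snd p))$a) *s Nop E (E (Xc a) *v v))"
    by (simp add: Xop_def Nop_sum Nop_scale)
  also have "\<dots> = 0"
  proof -
    have "Nop E (E (Xc a) *v v) = 0" for a
      using Nop_anti[OF assms(1), of a v] assms(2) by simp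
    then show ?thesis by simp
  qed
  finally show ?thesis using assms(2) by (simp add: Xop_zero)
qed

lemma Xop_axis: "Xop lam E (s, t, axis a 1) w = complex_of_real (lam$a) *s (E (Xc a) *v w)"
proof -
  have "\<And>aa. complex_of_real (lam$aa * (axis a 1 :: real^_)$aa) *s (E (Xc aa) *v w)
     = (if aa = a then complex_of_real (lam$a) *s (E (Xc a) *v w) else 0)"
    by (auto simp: axis_def)
  then show ?thesis by (simp add: Xop_def)
qed

lemma commut_axis:
  assumes "is_clifford E"
  shows "Xop lam E (s, t, axis a 1) (Nop E v) - Nop E (Xop lam E (s, t, axis a 1) v)
     = complex_of_real (2 * lam$a) *s (E (Xc a) *v Nop E v)"
  unfolding Xop_axis Nop_scale
  using Nop_anti[OF assms, of a v] by (simp add: vec_eq_iff algebra_simps)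


lemma nablaS_eq: "nablaS lam E k phi p = dder phi p (frame lam k p)
   + complex_of_real (sf k / 4) *s (Xop lam E p (Nop E (phi p)) - Nop E (Xop lam E p (phi p)))"
  unfolding nablaS_def by (subst spin_sum) (rule refl)

lemma Ck_const: "Ck k (\<lambda>x::'a::real_normed_vector. c :: 'b::real_normed_vector)"
proof (induction k arbitrary: c)
  case 0 then show ?case by simp
next
  case (Suc k)
  show ?case
    apply (simp only: Ck.simps)
    apply (rule exI[where x="\<lambda>x v. 0"])
    using Suc by simp
qed

lemma smooth_const: "smooth (\<lambda>x. c)"
  by (simp add: smooth_def Ck_const)

lemma Xop_origin: "Xop lam E (s, t, 0) w = 0"
  by (simp add: Xop_def)

lemma Fq_origin: "Fq lam (s, t, 0) = 0"
  by (simp add: Fq_def)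

lemma const_parallel:
  assumes "is_clifford E" "Nop E v = 0"
  shows "(\<lambda>p. v) \<in> parallel_spinors lam E"
  unfolding parallel_spinors_def
  using commut_zero[OF assms] by (simp add: smooth_const nablaS_eq dder_const)

lemma parallel_const:
  fixes lam :: "real^('m::finite)" and E :: "'m fidx \<Rightarrow> complex^'s^'s"
  assumes cl: "is_clifford E" and lam: "\<forall>j. lam$j \<noteq> 0"
    and P: "phi \<in> parallel_spinors lam E"
  shows "\<exists>v. Nop E v = 0 \<and> (\<forall>p. phi p = v)"
proof -
  from P have sm: "smooth phi" and par: "\<And>k p. nablaS lam E k phi p = 0"
    by (auto simp: parallel_spinors_def)
  from sm have "Ck (Suc 0) phi" by (simp add: smooth_def)
  then obtain f' where hd: "\<And>x. (phi has_derivative f' x) (at x)"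
    by auto
  have dd: "dder phi p w = f' p w" for p w
    using frechet_derivative_at[OF hd[of p], symmetric] by (simp add: dder_def)
  have lin: "linear (f' p)" for p
    using hd has_derivative_linear by blast
  define C where "C p = Xop lam E p (Nop E (phi p)) - Nop E (Xop lam E p (phi p))" for p
  have eq: "f' p (frame lam k p) + complex_of_real (sf k / 4) *s C p = 0" for k p
    using par[of k p] by (simp add: nablaS_eq dd C_def)
  have hx: "f' p (0, 0, axis a 1) = 0" for p a
    using eq[of p "Xc a"] by (simp add: sf_def frame_def)
  have ht: "f' p (0, 1, 0) = 0" for p
  proof -
    have "f' p (frame lam Zero p) = f' p (frame lam Bar0 p)"
    proof -
      have "sf Zero = (sf Bar0 :: real)" by (simp add: sf_def)
      then show ?thesis using eq[of p Zero] eq[of p Bar0] by (metis add_right_cancel)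
    qed
    then have "f' p (frame lam Zero p - frame lam Bar0 p) = 0"
      by (simp add: linear_diff[OF lin])
    moreover have "frame lam Zero p - frame lam Bar0 p = (0, 1, 0)"
      by (simp add: frame_def field_simps)
    ultimately show ?thesis by simp
  qed
  have hxv: "f' p (0, 0, v) = 0" for p v
  proof -
    have l0: "linear (\<lambda>v::real^'m. (0::real, 0::real, v))"
      by (rule linearI) (auto simp: add_Pair)
    have l: "linear (\<lambda>v::real^'m. f' p (0, 0, v))"
      using linear_compose[OF l0 lin[of p]] by (simp add: o_def)
    have "v = (\<Sum>a\<in>UNIV. v$a *\<^sub>R axis a 1)"
      using basis_expansion[of v] by (simp add: scalar_mult_eq_scaleR)
    then have "f' p (0, 0, v) = (\<Sum>a\<in>UNIV. v$a *\<^sub>R f' p (0, 0, axis a 1))"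
      using linear_sum[OF l, of "\<lambda>a. v$a *\<^sub>R axis a 1" UNIV] linear_scale[OF l]
      by (metis (no_types, lifting) sum.cong)
    then show ?thesis by (simp add: hx)
  qed
  have h0: "f' (s, t, 0) w = 0" for s t w
  proof -
    have z: "f' (s, t, 0) (1, 1/2, 0) = 0"
      using eq[of "(s, t, 0)" Zero] by (simp add: Xop_origin C_def frame_def Fq_origin Nop_def)
    obtain a b c where w: "w = (a, b, c)" by (cases w) auto
    have "w = a *\<^sub>R (1, 1/2, 0) + ((b - a/2) *\<^sub>R (0, 1, 0) + (0, 0, c))"
      by (simp add: w algebra_simps)
    then have "f' (s, t, 0) w = a *\<^sub>R f' (s, t, 0) (1, 1/2, 0) + ((b - a/2) *\<^sub>R f' (s, t, 0) (0, 1, 0) + f' (s, t, 0) (0, 0, c))"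
      by (metis linear_add[OF lin] linear_scale[OF lin])
    then show ?thesis using z ht hxv by simp
  qed
  define v where "v = phi (0, 0, 0)"
  have const: "phi p = v" for p
    unfolding v_def by (rule const_from_deriv[OF hd hxv h0])
  then have phiv: "phi = (\<lambda>p. v)" by auto
  obtain a :: 'm where True by simp
  have "0 = nablaS lam E Zero phi (0, 0, axis a 1)" using par by simp
  also have "\<dots> = complex_of_real (1/4) *s (complex_of_real (2 * lam$a) *s (E (Xc a) *v Nop E v))"
    by (simp add: nablaS_eq phiv dder_const commut_axis[OF cl] sf_def)
  finally have "E (Xc a) *v Nop E v = 0"
    using lam by (simp add: vec_eq_iff)
  then have "E (Xc a) *v (E (Xc a) *v Nop E v) = 0" by simp
  then have "Nop E v = 0" by (simp add: cliff_sq[OF cl] eps_def)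
  with const show ?thesis by blast
qed


interpretation fs: vector_space "fscale :: complex \<Rightarrow> (('m::finite) pt \<Rightarrow> complex^'s) \<Rightarrow> _"
  by unfold_locales (auto simp: fscale_def fun_eq_iff vector_add_ldistrib vector_sadd_rdistrib vector_smult_assoc)

lemma lin_const: "Vector_Spaces.linear (*s) (fscale :: complex \<Rightarrow> (('m::finite) pt \<Rightarrow> complex^'s) \<Rightarrow> _) (\<lambda>v p. v)"
  by unfold_locales (auto simp: fscale_def fun_eq_iff)

lemma dim_fs: "vector_space.dim (fscale :: complex \<Rightarrow> (('m::finite) pt \<Rightarrow> complex^'s) \<Rightarrow> _) ((\<lambda>v p. v) ` S) = vec.dim S"
proof -
  have pair: "finite_dimensional_vector_space_pair_1 (*s) (cart_basis :: (complex^'s) set)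
      (fscale :: complex \<Rightarrow> (('m::finite) pt \<Rightarrow> complex^'s) \<Rightarrow> _)"
    by (rule finite_dimensional_vector_space_pair_1.intro[OF
          vec.finite_dimensional_vector_space_pair_1_axioms[THEN finite_dimensional_vector_space_pair_1.axioms(1)]
          fs.vector_space_axioms])
  show ?thesis
    by (rule finite_dimensional_vector_space_pair_1.dim_image_eq[OF pair lin_const])
       (auto simp: inj_on_def fun_eq_iff)
qed

definition Pop :: "('m fidx \<Rightarrow> complex^'s^'s) \<Rightarrow> complex^'s \<Rightarrow> complex^'s" where
  "Pop E w = E Zero *v w + E Bar0 *v w"

lemma NN:
  assumes cl: "is_clifford E"
  shows "Nop E (Nop E u) = 0"
proof -
  have a: "E Zero *v (E Bar0 *v u) = - (E Bar0 *v (E Zero *v u))"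
    using cliff_anti[OF cl, of Zero Bar0 u] by simp
  show ?thesis
    by (simp add: Nop_def vec.diff a cliff_sq[OF cl] eps_def vec_eq_iff)
qed

lemma NP:
  assumes cl: "is_clifford E"
  shows "Nop E (Pop E u) + Pop E (Nop E u) = (-4) *s u"
proof -
  have a: "E Zero *v (E Bar0 *v u) = - (E Bar0 *v (E Zero *v u))"
    using cliff_anti[OF cl, of Zero Bar0 u] by simp
  show ?thesis
    by (simp add: Nop_def Pop_def vec.diff vec.add a cliff_sq[OF cl] eps_def vec_eq_iff)
qed


lemma Nop_add: "Nop E (x + y) = Nop E x + Nop E y"
  by (simp add: Nop_def vec.add)

lemma Nop_zero[simp]: "Nop E 0 = 0"
  by (simp add: Nop_def)

lemma Pop_add: "Pop E (x + y) = Pop E x + Pop E y"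
  by (simp add: Pop_def vec.add)

lemma Pop_scale: "Pop E (c *s x) = c *s Pop E x"
  by (simp add: Pop_def vector_scalar_commute vector_add_ldistrib)

lemma Pop_zero[simp]: "Pop E 0 = 0"
  by (simp add: Pop_def)

lemma Pop_diff: "Pop E (x - y) = Pop E x - Pop E y"
  by (simp add: Pop_def vec.diff)

lemma Nop_diff: "Nop E (x - y) = Nop E x - Nop E y"
  by (simp add: Nop_def vec.diff)

lemma dimK:
  fixes E :: "('m::finite) fidx \<Rightarrow> complex^'s^'s"
  assumes cl: "is_clifford E"
  shows "vec.dim {v. Nop E v = 0} + vec.dim {v. Nop E v = 0} = CARD('s)"
proof -
  define K where "K = {v. Nop E v = 0}"
  define T where "T = Pop E ` K"
  have NPK: "Nop E (Pop E w) = (-4) *s w" if "w \<in> K" for w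
    using NP[OF cl, of w] that by (simp add: K_def)
  have subK: "vec.subspace K"
    unfolding vec.subspace_def K_def by (simp add: Nop_add Nop_scale)
  have subT: "vec.subspace T"
    unfolding vec.subspace_def T_def
  proof (intro conjI ballI allI)
    show "0 \<in> Pop E ` K" using subK by (auto simp: vec.subspace_def intro!: image_eqI[of 0])
  next
    fix x y assume "x \<in> Pop E ` K" "y \<in> Pop E ` K"
    then obtain a b where "a \<in> K" "b \<in> K" "x = Pop E a" "y = Pop E b" by auto
    then show "x + y \<in> Pop E ` K"
      using subK by (auto simp: vec.subspace_def Pop_add intro!: image_eqI[of _ _ "a + b"])
  next
    fix c x assume "x \<in> Pop E ` K"
    then obtain a where "a \<in> K" "x = Pop E a" by auto
    then show "c *s x \<in> Pop E ` K"
      using subK by (auto simp: vec.subspace_def Pop_scale intro!: image_eqI[of _ _ "c *s a"])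
  qed
  have sumUNIV: "{x + y |x y. x \<in> K \<and> y \<in> T} = UNIV"
  proof (rule set_eqI, rule iffI, simp)
    fix u :: "complex^'s"
    define x where "x = (-1/4) *s Nop E (Pop E u)"
    define w where "w = (-1/4) *s Nop E u"
    have xK: "x \<in> K" unfolding x_def K_def
      by (simp only: mem_Collect_eq Nop_scale NN[OF cl] vec.scale_zero_right)
    have wK: "w \<in> K" unfolding w_def K_def
      by (simp only: mem_Collect_eq Nop_scale NN[OF cl] vec.scale_zero_right)
    have "x + Pop E w = (-1/4) *s (Nop E (Pop E u) + Pop E (Nop E u))"
      unfolding x_def w_def Pop_scale by (simp only: vector_add_ldistrib)
    also have "\<dots> = u" by (simp add: NP[OF cl])
    finally show "u \<in> {x + y |x y. x \<in> K \<and> y \<in> T}"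
      using xK wK unfolding T_def by blast
  qed
  have int0: "K \<inter> T = {0}"
  proof
    show "K \<inter> T \<subseteq> {0}"
    proof
      fix u assume "u \<in> K \<inter> T"
      then obtain w where u: "u \<in> K" "w \<in> K" "u = Pop E w" by (auto simp: T_def)
      then have "(-4) *s w = 0" using NPK[of w] by (simp add: K_def)
      then have "w = 0" by (simp add: vec_eq_iff)
      then show "u \<in> {0}" using u by simp
    qed
  next
    show "{0} \<subseteq> K \<inter> T"
      using subK subT by (auto simp: vec.subspace_def)
  qed
  have linP: "Vector_Spaces.linear (*s) (*s) (Pop E)"
  proof -
    have "Pop E = (*v) (E Zero + E Bar0)"
      by (simp add: fun_eq_iff Pop_def matrix_vector_mult_add_rdistrib)
    then show ?thesis by (simp add: vec.linear_axioms)
  qed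
  have injP: "inj_on (Pop E) (vec.span K)"
  proof -
    have spanK: "vec.span K = K" using subK by simp
    show ?thesis unfolding spanK
    proof (rule inj_onI)
      fix a b assume ab: "a \<in> K" "b \<in> K" "Pop E a = Pop E b"
      have "a - b \<in> K" using ab by (simp add: K_def Nop_diff)
      then have "Nop E (Pop E (a - b)) = (-4) *s (a - b)" by (rule NPK)
      then have "(-4) *s (a - b) = 0" using ab by (simp add: Pop_diff)
      then show "a = b" by (simp add: vec_eq_iff)
    qed
  qed
  have dT: "vec.dim T = vec.dim K"
    unfolding T_def by (rule vec.dim_image_eq[OF linP injP])
  have "vec.dim {x + y |x y. x \<in> K \<and> y \<in> T} + vec.dim (K \<inter> T) = vec.dim K + vec.dim T"
    by (rule vec.dim_sums_Int[OF subK subT])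
  then have "CARD('s) = vec.dim K + vec.dim K"
    unfolding sumUNIV int0 dT by (simp add: card_cart_basis)
  then show ?thesis by (simp add: K_def)
qed


lemma DeltaV_Nop: "DeltaV E = {v. Nop E v = 0}"
  by (simp add: DeltaV_def Nop_def matrix_vector_mult_diff_rdistrib)

theorem proposition5:
  fixes lam :: "real^'m" and E :: "'m fidx \<Rightarrow> complex^'s^'s"
  assumes "\<forall>j. lam$j \<noteq> 0"
    and "CARD('s) = 2 ^ ((CARD('m) + 2) div 2)"
    and "is_clifford E"
  shows "parallel_spinors lam E = {phi. \<exists>v\<in>DeltaV E. \<forall>p. phi p = v}
         \<and> vector_space.dim fscale (parallel_spinors lam E) = 2 ^ ((CARD('m) + 2) div 2) div 2"
proof -
  have PS: "parallel_spinors lam E = {phi. \<exists>v\<in>DeltaV E. \<forall>p. phi p = v}"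
  proof (rule set_eqI, rule iffI)
    fix phi assume "phi \<in> parallel_spinors lam E"
    from parallel_const[OF assms(3) assms(1) this] obtain v where "Nop E v = 0" "\<forall>p. phi p = v"
      by blast
    then show "phi \<in> {phi. \<exists>v\<in>DeltaV E. \<forall>p. phi p = v}" by (auto simp: DeltaV_Nop)
  next
    fix phi :: "'m pt \<Rightarrow> complex^'s" assume "phi \<in> {phi. \<exists>v\<in>DeltaV E. \<forall>p. phi p = v}"
    then obtain v where v: "Nop E v = 0" "\<forall>p. phi p = v" by (auto simp: DeltaV_Nop)
    then have "phi = (\<lambda>p. v)" by auto
    then show "phi \<in> parallel_spinors lam E" using const_parallel[OF assms(3) v(1)] by simp
  qed
  have img: "{phi. \<exists>v\<in>DeltaV E. \<forall>p. phi p = v} = (\<lambda>v p. v) ` {v. Nop E v = 0}"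
    by (auto simp: DeltaV_Nop fun_eq_iff)
  have "vector_space.dim fscale (parallel_spinors lam E) = vec.dim {v. Nop E v = 0}"
    unfolding PS img by (rule dim_fs)
  moreover have "vec.dim {v. Nop E v = 0} + vec.dim {v. Nop E v = 0} = CARD('s)"
    by (rule dimK[OF assms(3)])
  ultimately show ?thesis using PS assms(2) by simp
qed

end
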